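(* Let $p$ and $q$ be odd primes and let $h \geq 1$ be an odd integer. Suppose $r, s$ are rational numbers with $2r, 2s \in \mathbb{Z}$, $2r \not\equiv 0 \pmod q$, $2s \not\equiv 0 \pmod q$, and $r^2 - p s^2 = q^h$. Define the rational number $S$ by $(r + s\sqrt{p})^h - (r - s\sqrt{p})^h = 2 S \sqrt{p}$. Then $\left(\frac{S}{q}\right) = \left(\frac{s}{q}\right)$.
   Context: $\left(\frac{\cdot}{q}\right)$ is the Legendre symbol modulo $q$; for a rational number whose denominator is a power of $2$ (such as $s$ and $S$), it is evaluated on its reduction modulo $q$ (using that $2$ is invertible modulo $q$). *)

theory Defs
  imports "HOL-Analysis.Analysis" "HOL-Number_Theory.Number_Theory"
begin

text \<open>Reduction modulo q of a rational number whose denominator is invertible mod q: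
  the unique residue c in [0,q) with d * c = a (mod q), where x = a/d in lowest terms.\<close>
definition rat_mod :: "rat \<Rightarrow> int \<Rightarrow> int" where
  "rat_mod x q = (let (a, d) = quotient_of x in
      (THE c. 0 \<le> c \<and> c < q \<and> [d * c = a] (mod q)))"

definition Legendre_rat :: "rat \<Rightarrow> int \<Rightarrow> int" where
  "Legendre_rat x q = Legendre (rat_mod x q) q"

end

theory Submission
  imports Defs
begin

lemma rat_mod_char:
  fixes q m N :: int and x :: rat
  assumes "x * of_int m = of_int N" "coprime m q" "prime q"
  shows "[m * rat_mod x q = N] (mod q)"
proof -
  obtain n d where nd: "quotient_of x = (n, d)" by (cases "quotient_of x") auto
  have xd: "x = of_int n / of_int d" using quotient_of_div[OF nd] .
  have dpos: "d > 0" using quotient_of_denom_pos[OF nd] .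
  have cop: "coprime n d" using quotient_of_coprime[OF nd] .
  have q1: "q > 1" using assms(3) prime_gt_1_int by blast
  have "of_int n * of_int m = (of_int (N * d) :: rat)"
    using assms(1) dpos unfolding xd by (simp add: field_simps)
  hence nm: "n * m = N * d" by (metis of_int_eq_iff of_int_mult)
  hence "d dvd n * m" by simp
  hence "d dvd m" using cop by (metis coprime_commute coprime_dvd_mult_right_iff)
  hence cdq: "coprime d q" using assms(2) coprime_imp_coprime dvd_trans by blast
  obtain v where v: "[d * v = 1] (mod q)" using cong_solve_coprime_int[OF cdq] by blast
  define c where "c = (v * n) mod q"
  have P: "0 \<le> c \<and> c < q \<and> [d * c = n] (mod q)"
  proof (intro conjI)
    show "0 \<le> c" "c < q" using q1 by (auto simp: c_def)
    have "[d * c = d * (v * n)] (mod q)" unfolding c_def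
      by (intro cong_mult cong_refl) (simp add: cong_def)
    moreover have "[d * (v * n) = 1 * n] (mod q)"
      using cong_mult[OF v cong_refl[of n]] by (simp add: ac_simps)
    ultimately show "[d * c = n] (mod q)" by (metis cong_trans mult_1)
  qed
  have U: "c' = c" if "0 \<le> c' \<and> c' < q \<and> [d * c' = n] (mod q)" for c'
  proof -
    have "[d * c' = d * c] (mod q)" using cong_trans[OF conjunct2[OF conjunct2[OF that]] cong_sym[OF conjunct2[OF conjunct2[OF P]]]] .
    hence "[c' = c] (mod q)" using cong_mult_lcancel[OF cdq] by blast
    thus ?thesis using that P by (simp add: cong_def)
  qed
  have rm: "rat_mod x q = c" unfolding rat_mod_def nd
    using the_equality[of "\<lambda>c'. 0 \<le> c' \<and> c' < q \<and> [d * c' = n] (mod q)", OF P U] by simp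
  have "[d * (m * c) = m * n] (mod q)"
    using cong_mult[OF cong_refl[of m] conjunct2[OF conjunct2[OF P]]] by (simp add: ac_simps)
  hence "[d * (m * c) = d * N] (mod q)" using nm by (simp add: ac_simps)
  hence "[m * c = N] (mod q)" using cong_mult_lcancel[OF cdq] by blast
  thus ?thesis using rm by simp
qed

lemma Legendre_cong':
  assumes "[x = y] (mod q)" shows "Legendre x q = Legendre y q"
proof -
  have "[x = 0] (mod q) \<longleftrightarrow> [y = 0] (mod q)"
  proof
    assume "[x = 0] (mod q)" thus "[y = 0] (mod q)" by (rule cong_trans[OF cong_sym[OF assms]])
  next
    assume "[y = 0] (mod q)" thus "[x = 0] (mod q)" by (rule cong_trans[OF assms])
  qed
  moreover have "QuadRes q x \<longleftrightarrow> QuadRes q y" unfolding QuadRes_def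
  proof
    assume "\<exists>z. [z^2 = x] (mod q)"
    then obtain z where "[z^2 = x] (mod q)" by blast
    hence "[z^2 = y] (mod q)" by (rule cong_trans[OF _ assms])
    thus "\<exists>z. [z^2 = y] (mod q)" by blast
  next
    assume "\<exists>z. [z^2 = y] (mod q)"
    then obtain z where "[z^2 = y] (mod q)" by blast
    hence "[z^2 = x] (mod q)" by (rule cong_trans[OF _ cong_sym[OF assms]])
    thus "\<exists>z. [z^2 = x] (mod q)" by blast
  qed
  ultimately show ?thesis unfolding Legendre_def by simp
qed

lemma Legendre_sq:
  fixes q w x :: int
  assumes "prime q" "\<not> [w = 0] (mod q)"
  shows "Legendre (w^2 * x) q = Legendre x q"
proof -
  have cw: "coprime w q" using assms
    by (metis cong_0_iff coprime_commute prime_imp_coprime)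
  have cw2: "coprime (w^2) q" using cw by simp
  have z: "[w^2 * x = 0] (mod q) \<longleftrightarrow> [x = 0] (mod q)"
    using cong_mult_lcancel[OF cw2, of x 0] by simp
  obtain v where v: "[w * v = 1] (mod q)" using cong_solve_coprime_int[OF cw] by blast
  have "QuadRes q (w^2 * x) \<longleftrightarrow> QuadRes q x"
  proof
    assume "QuadRes q (w^2 * x)"
    then obtain y where y: "[y^2 = w^2 * x] (mod q)" unfolding QuadRes_def by blast
    have f1: "[(v * y)^2 = v^2 * (w^2 * x)] (mod q)"
      using cong_mult[OF cong_refl[of "v^2"] y] by (simp add: power_mult_distrib)
    have f2: "[v^2 * (w^2 * x) = ((w * v)^2) * x] (mod q)"
      by (simp add: power_mult_distrib ac_simps)
    have f3: "[((w * v)^2) * x = 1^2 * x] (mod q)"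
      by (intro cong_mult cong_pow v cong_refl)
    have "[(v * y)^2 = x] (mod q)" using cong_trans[OF f1 cong_trans[OF f2 f3]] by simp
    thus "QuadRes q x" unfolding QuadRes_def by blast
  next
    assume "QuadRes q x"
    then obtain y where y: "[y^2 = x] (mod q)" unfolding QuadRes_def by blast
    have "[(w * y)^2 = w^2 * x] (mod q)"
      using cong_mult[OF cong_refl[of "w^2"] y] by (simp add: power_mult_distrib)
    thus "QuadRes q (w^2 * x)" unfolding QuadRes_def by blast
  qed
  thus ?thesis using z unfolding Legendre_def by simp
qed


lemma binom_diff:
  fixes x y :: real
  shows "(x + y)^h - (x - y)^h = (\<Sum>k\<le>h. if odd k then 2 * (of_nat (h choose k) * y^k * x^(h-k)) else 0)"
proof -
  have "(x + y)^h = (\<Sum>k\<le>h. of_nat (h choose k) * y^k * x^(h-k))"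
    using binomial_ring[of y x h] by (simp only: add.commute atLeast0AtMost)
  moreover have "(x - y)^h = (\<Sum>k\<le>h. of_nat (h choose k) * (-y)^k * x^(h-k))"
    using binomial_ring[of "-y" x h] by (simp only: diff_conv_add_uminus add.commute atLeast0AtMost)
  ultimately have "(x + y)^h - (x - y)^h = (\<Sum>k\<le>h. of_nat (h choose k) * y^k * x^(h-k) - of_nat (h choose k) * (-y)^k * x^(h-k))"
    by (simp only: sum_subtractf)
  also have "\<dots> = (\<Sum>k\<le>h. if odd k then 2 * (of_nat (h choose k) * y^k * x^(h-k)) else 0)"
  proof (intro sum.cong refl)
    fix k show "of_nat (h choose k) * y^k * x^(h-k) - of_nat (h choose k) * (-y)^k * x^(h-k) = (if odd k then 2 * (of_nat (h choose k) * y^k * x^(h-k)) else 0)"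
      by (cases "odd k") (simp_all add: power_minus_odd power_minus_even)
  qed
  finally show ?thesis .
qed

theorem lemma5:
  fixes p q :: int and h :: nat and r s S :: rat and a b :: int
  assumes "prime p" and "odd p" and "prime q" and "odd q"
    and "odd h" and "h \<ge> 1"
    and "2 * r = of_int a" and "2 * s = of_int b"
    and "\<not> [a = 0] (mod q)" and "\<not> [b = 0] (mod q)"
    and "r ^ 2 - of_int p * s ^ 2 = of_int q ^ h"
    and "(of_rat r + of_rat s * sqrt (of_int p)) ^ h - (of_rat r - of_rat s * sqrt (of_int p)) ^ h
           = 2 * of_rat S * sqrt (of_int p)"
  shows "Legendre_rat S q = Legendre_rat s q"
proof -
  have p0: "p > 0" using assms(1) prime_gt_0_int by blast
  define Sr where "Sr = (\<Sum>k\<le>h. if odd k then of_nat (h choose k) * r^(h-k) * s^k * of_int p ^ ((k-1) div 2) else 0)"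
  define T where "T = (\<Sum>k\<le>h. if odd k then int (h choose k) * a^(h-k) * b^k * p ^ ((k-1) div 2) else 0)"
  have sq: "sqrt (real_of_int p) ^ k = real_of_int p ^ ((k-1) div 2) * sqrt (real_of_int p)" if "odd k" for k
  proof -
    have "k = 2 * ((k-1) div 2) + 1" using that by presburger
    hence "sqrt (real_of_int p) ^ k = (sqrt (real_of_int p) ^ 2) ^ ((k-1) div 2) * sqrt (real_of_int p)"
      by (metis power_mult power_Suc2 Suc_eq_plus1)
    thus ?thesis using p0 by simp
  qed
  have "2 * of_rat S * sqrt (of_int p) = 2 * sqrt (of_int p) * (of_rat Sr :: real)"
    unfolding assms(12)[symmetric] binom_diff Sr_def of_rat_sum sum_distrib_left
    by (intro sum.cong refl) (auto simp: sq of_rat_mult of_rat_power power_mult_distrib)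
  hence "(of_rat S :: real) = of_rat Sr" using p0 by simp
  hence SS: "S = Sr" by simp
  have ST: "S * 2^h = of_int T"
    unfolding SS Sr_def T_def sum_distrib_right of_int_sum
  proof (intro sum.cong refl)
    fix k assume "k \<in> {..h}"
    hence "(2::rat)^h = 2^(h-k) * 2^k" by (simp add: power_add[symmetric])
    show "(if odd k then of_nat (h choose k) * r^(h-k) * s^k * of_int p ^ ((k-1) div 2) else 0) * 2^h =
      of_int (if odd k then int (h choose k) * a^(h-k) * b^k * p ^ ((k-1) div 2) else 0)"
    proof -
      have "r^(h-k) * s^k * 2^h = (2 * r)^(h-k) * (2 * s)^k"
        using \<open>(2::rat)^h = 2^(h-k) * 2^k\<close> by (simp add: power_mult_distrib ac_simps)
      hence e: "r^(h-k) * s^k * 2^h = of_int a^(h-k) * of_int b^k" using assms(7,8) by simp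
      have "of_nat (h choose k) * r^(h-k) * s^k * of_int p ^ ((k-1) div 2) * 2^h
         = of_nat (h choose k) * (r^(h-k) * s^k * 2^h) * (of_int p ^ ((k-1) div 2) :: rat)"
        by (simp only: ac_simps)
      thus ?thesis unfolding e by simp

    qed
  qed
  have cq: "coprime (2::int) q" using assms(4) by (simp add: coprime_commute)
  have cqh: "coprime ((2::int)^h) q" using cq by simp
  define cS where "cS = rat_mod S q"
  define cs where "cs = rat_mod s q"
  have hS: "[2^h * cS = T] (mod q)" unfolding cS_def using rat_mod_char[of S "2^h" T] ST cqh assms(3) by simp
  have hs: "[2 * cs = b] (mod q)" unfolding cs_def using rat_mod_char[of s 2 b] assms(8) cq assms(3)
    by (simp add: mult.commute)
  have "4 * (r ^ 2 - of_int p * s ^ 2) = (2 * r)^2 - of_int p * (2 * s)^2" by (simp add: power2_eq_square)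
  hence "of_int (a^2 - p * b^2) = (of_int (4 * q^h) :: rat)" using assms(7,8,11) by simp
  hence "a^2 - p * b^2 = 4 * q^h" using of_int_eq_iff by blast
  moreover have "q dvd 4 * q^h" using assms(6) by (simp add: dvd_power)
  ultimately have ab: "[a^2 = p * b^2] (mod q)"
    by (simp add: cong_iff_dvd_diff)
  have tmc: "[a^(h-k) * b^k * p ^ ((k-1) div 2) = a^(h-1) * b] (mod q)" if "odd k" "k \<le> h" for k
  proof -
    define j where "j = (k-1) div 2"
    have kj: "k = 2 * j + 1" using that unfolding j_def by presburger
    have e1: "a^(h-k) * b^k * p ^ ((k-1) div 2) = b * (a^(h-k) * (p * b^2)^j)"
      unfolding kj j_def[symmetric] by (simp add: power_mult_distrib power_mult power_add ac_simps flip: power_mult)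
    have e2: "a^(h-1) * b = b * (a^(h-k) * (a^2)^j)"
      using that unfolding kj by (simp add: power_mult[symmetric] power_add[symmetric])
    have "[b * (a^(h-k) * (p * b^2)^j) = b * (a^(h-k) * (a^2)^j)] (mod q)"
      by (intro cong_mult cong_refl cong_pow cong_sym[OF ab])
    thus ?thesis by (simp only: e1 e2)
  qed
  have "[T = (\<Sum>k\<le>h. if odd k then int (h choose k) * (a^(h-1) * b) else 0)] (mod q)"
    unfolding T_def
  proof (intro cong_sum)
    fix k assume "k \<in> {..h}"
    thus "[(if odd k then int (h choose k) * a^(h-k) * b^k * p ^ ((k-1) div 2) else 0) =
      (if odd k then int (h choose k) * (a^(h-1) * b) else 0)] (mod q)"
      using tmc[of k] by (auto intro: cong_mult[OF cong_refl] simp: mult.assoc)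
  qed
  also have "(\<Sum>k\<le>h. if odd k then int (h choose k) * (a^(h-1) * b) else 0)
     = (\<Sum>k\<le>h. if odd k then int (h choose k) else 0) * (a^(h-1) * b)"
    unfolding sum_distrib_right by (intro sum.cong refl) simp
  also have "(\<Sum>k\<le>h. if odd k then int (h choose k) else 0) = 2^(h-1)"
  proof -
    have "2 * (\<Sum>k\<le>h. if odd k then int (h choose k) else 0) = 2^h"
      using choose_odd_sum[of h] assms(6) by simp
    moreover have "(2::int)^h = 2 * 2^(h-1)" using assms(6) by (simp add: power_eq_if)
    ultimately show ?thesis by simp
  qed
  finally have hT: "[T = 2^(h-1) * (a^(h-1) * b)] (mod q)" .
  have "[2^(h-1) * (a^(h-1) * b) = 2^(h-1) * (a^(h-1) * (2 * cs))] (mod q)"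
    by (intro cong_mult cong_refl cong_sym[OF hs])
  also have "2^(h-1) * (a^(h-1) * (2 * cs)) = 2^h * (a^(h-1) * cs)"
    using assms(6) by (simp add: power_eq_if)
  finally have hb: "[2^(h-1) * (a^(h-1) * b) = 2^h * (a^(h-1) * cs)] (mod q)" .
  have "[2^h * cS = 2^h * (a^(h-1) * cs)] (mod q)"
    using cong_trans[OF hS cong_trans[OF hT hb]] .
  hence c1: "[cS = a^(h-1) * cs] (mod q)" using cong_mult_lcancel[OF cqh] by blast
  have "a^(h-1) = (a^((h-1) div 2))^2"
    using assms(5) by (simp add: power_mult[symmetric]) 
  hence c2: "[cS = (a^((h-1) div 2))^2 * cs] (mod q)" using c1 by simp
  have nz: "\<not> [a^((h-1) div 2) = 0] (mod q)"
    using assms(3,9) by (simp add: cong_0_iff) (metis prime_dvd_power)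
  have "Legendre cS q = Legendre cs q"
    using Legendre_cong'[OF c2] Legendre_sq[OF assms(3) nz] by simp
  thus ?thesis unfolding Legendre_rat_def cS_def cs_def .
qed

end
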